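(* Let $V$ be a nonlocal vertex algebra. Assume there exists a lower-truncated, exhaustive increasing filtration $F=\{F_n\}_{n\in\mathbb{Z}}$ of $V$ with $\mathbf{1}\in F_0$ satisfying either (i) $a_kF_n\subset F_{m+n}$ for all $a\in F_m$, $m,n,k\in\mathbb{Z}$, or (ii) $a_mF_n\subset F_{k+n-m-1}$ for all $a\in F_k$, $k,m,n\in\mathbb{Z}$, such that the left adjoint module for $\mathrm{Gr}_F(V)$ is graded-irreducible. Then the left adjoint module for $V$ is irreducible.
   Context: A nonlocal vertex algebra is a complex vector space $V$ with vector $\mathbf{1}$ and linear $Y:V\to\mathrm{Hom}(V,V((x)))$, $Y(v,x)=\sum_nv_nx^{-n-1}$, with $Y(\mathbf{1},x)v=v$, $Y(v,x)\mathbf{1}\in V[[x]]$ with constant term $v$, and weak associativity $(x_0+x_2)^lY(u,x_0+x_2)Y(v,x_2)w=(x_0+x_2)^lY(Y(u,x_0)v,x_2)w$ for some $l\ge0$. The left adjoint module is $V$ acting on itself by $Y$; it is irreducible if its only submodules are $0$ and $V$. A filtration $F_n\subset F_{n+1}$ is lower-truncated if $F_n=0$ for $n$ sufficiently small, and exhaustive if $\bigcup_nF_n=V$. $\mathrm{Gr}_F(V)=\coprod_nF_n/F_{n-1}$ is a nonlocal vertex algebra with vacuum $\mathbf{1}+F_{-1}$ and products $(a+F_{m-1})_k(b+F_{n-1})=a_kb+F_{m+n-1}$ in case (i), resp. $a_kb+F_{m+n-k-2}$ in case (ii), for $a\in F_m$, $b\in F_n$; it is graded by the index $n$ (case (i)),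 resp. by $n$ as a $\mathbb{Z}$-graded algebra (case (ii)). Graded-irreducible means the only graded submodules of the adjoint module are $0$ and the whole space. *)

theory Defs
  imports Main "HOL-Library.Set_Algebras" Complex_Main
begin

text \<open>The vertex operator Y(a,x)b = sum_n a_n b x^(-n-1) is encoded by its modes:
  Y a n b = a_n b.\<close>

text \<open>Coefficient of x0^i x2^j in (x0+x2)^l Y(u,x0+x2)Y(v,x2)w,
  with (x0+x2)^e expanded in nonnegative powers of x2.  The summation set is finite
  by lower truncation.\<close>
definition wa_lhs ::
  "(complex \<Rightarrow> 'v \<Rightarrow> 'v) \<Rightarrow> ('v \<Rightarrow> int \<Rightarrow> 'v \<Rightarrow> 'v::ab_group_add) \<Rightarrow>
   'v \<Rightarrow> 'v \<Rightarrow> 'v \<Rightarrow> nat \<Rightarrow> int \<Rightarrow> int \<Rightarrow> 'v" where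
  "wa_lhs sc Y u v w l i j =
     (\<Sum>k\<in>{k::nat. Y v (int k - j - 1) w \<noteq> 0}.
        sc ((of_int (int l - (int l - 1 - int k - i) - 1) :: complex) gchoose k)
           (Y u (int l - 1 - int k - i) (Y v (int k - j - 1) w)))"

text \<open>Coefficient of x0^i x2^j in (x0+x2)^l Y(Y(u,x0)v,x2)w.\<close>
definition wa_rhs ::
  "(complex \<Rightarrow> 'v \<Rightarrow> 'v) \<Rightarrow> ('v \<Rightarrow> int \<Rightarrow> 'v \<Rightarrow> 'v::ab_group_add) \<Rightarrow>
   'v \<Rightarrow> 'v \<Rightarrow> 'v \<Rightarrow> nat \<Rightarrow> int \<Rightarrow> int \<Rightarrow> 'v" where
  "wa_rhs sc Y u v w l i j =
     (\<Sum>t\<in>{0..l}. sc (of_nat (l choose t))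
        (Y (Y u (int l - int t - 1 - i) v) (int t - j - 1) w))"

definition nonlocal_VA ::
  "(complex \<Rightarrow> 'v \<Rightarrow> 'v) \<Rightarrow> ('v \<Rightarrow> int \<Rightarrow> 'v \<Rightarrow> 'v::ab_group_add) \<Rightarrow> 'v \<Rightarrow> bool" where
  "nonlocal_VA sc Y vac \<longleftrightarrow>
     vector_space sc \<and>
     (\<forall>n b. Vector_Spaces.linear sc sc (\<lambda>a. Y a n b)) \<and>
     (\<forall>a n. Vector_Spaces.linear sc sc (Y a n)) \<and>
     (\<forall>a b. \<exists>N. \<forall>n\<ge>N. Y a n b = 0) \<and>
     (\<forall>n v. Y vac n v = (if n = -1 then v else 0)) \<and>
     (\<forall>v. (\<forall>n\<ge>0. Y v n vac = 0) \<and> Y v (-1) vac = v) \<and>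
     (\<forall>u v w. \<exists>l::nat. \<forall>i j. wa_lhs sc Y u v w l i j = wa_rhs sc Y u v w l i j)"

definition adjoint_irreducible ::
  "(complex \<Rightarrow> 'v \<Rightarrow> 'v) \<Rightarrow> ('v \<Rightarrow> int \<Rightarrow> 'v \<Rightarrow> 'v::ab_group_add) \<Rightarrow> bool" where
  "adjoint_irreducible sc Y \<longleftrightarrow>
     (\<forall>U. module.subspace sc U \<and> (\<forall>a k b. b \<in> U \<longrightarrow> Y a k b \<in> U) \<longrightarrow>
          U = {0} \<or> U = UNIV)"

definition good_filtration ::
  "(complex \<Rightarrow> 'v \<Rightarrow> 'v) \<Rightarrow> 'v \<Rightarrow> (int \<Rightarrow> 'v::ab_group_add set) \<Rightarrow> bool" where
  "good_filtration sc vac F \<longleftrightarrow>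
     (\<forall>n. module.subspace sc (F n)) \<and>
     (\<forall>n. F n \<subseteq> F (n + 1)) \<and>
     (\<exists>N. \<forall>n\<le>N. F n = {0}) \<and>
     (\<Union>n. F n) = UNIV \<and>
     vac \<in> F 0"

text \<open>tgt m n k = the filtration degree of a_k b for a in F_m, b in F_n:
  case (i): m + n; case (ii): m + n - k - 1.\<close>
definition tgt_i :: "int \<Rightarrow> int \<Rightarrow> int \<Rightarrow> int" where
  "tgt_i m n k = m + n"
definition tgt_ii :: "int \<Rightarrow> int \<Rightarrow> int \<Rightarrow> int" where
  "tgt_ii m n k = m + n - k - 1"

definition filt_compatible ::
  "('v \<Rightarrow> int \<Rightarrow> 'v \<Rightarrow> 'v) \<Rightarrow> (int \<Rightarrow> 'v set) \<Rightarrow> (int \<Rightarrow> int \<Rightarrow> int \<Rightarrow> int) \<Rightarrow> bool" where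
  "filt_compatible Y F tgt \<longleftrightarrow>
     (\<forall>m n k a b. a \<in> F m \<longrightarrow> b \<in> F n \<longrightarrow> Y a k b \<in> F (tgt m n k))"

text \<open>The class a + F_(n-1) of a \<in> F_n in the graded piece F_n/F_(n-1) of Gr_F(V).\<close>
definition gcls :: "(int \<Rightarrow> 'v::ab_group_add set) \<Rightarrow> int \<Rightarrow> 'v \<Rightarrow> 'v set" where
  "gcls F n a = (\<lambda>x. a + x) ` F (n - 1)"

definition gpiece :: "(int \<Rightarrow> 'v::ab_group_add set) \<Rightarrow> int \<Rightarrow> 'v set set" where
  "gpiece F n = gcls F n ` F n"

text \<open>A graded submodule of the left adjoint module of Gr_F(V): a family W n of
  subspaces of F_n/F_(n-1) (quotient operations computed on representatives),
  stable under the Gr product (a + F_(m-1))_k (b + F_(n-1)) = a_k b + F_(tgt m n k - 1).\<close>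
definition gr_graded_submodule ::
  "(complex \<Rightarrow> 'v \<Rightarrow> 'v) \<Rightarrow> ('v \<Rightarrow> int \<Rightarrow> 'v \<Rightarrow> 'v::ab_group_add) \<Rightarrow> (int \<Rightarrow> 'v set) \<Rightarrow>
   (int \<Rightarrow> int \<Rightarrow> int \<Rightarrow> int) \<Rightarrow> (int \<Rightarrow> 'v set set) \<Rightarrow> bool" where
  "gr_graded_submodule sc Y F tgt W \<longleftrightarrow>
     (\<forall>n. W n \<subseteq> gpiece F n) \<and>
     (\<forall>n. gcls F n 0 \<in> W n) \<and>
     (\<forall>n a b. a \<in> F n \<longrightarrow> b \<in> F n \<longrightarrow> gcls F n a \<in> W n \<longrightarrow> gcls F n b \<in> W n \<longrightarrow>
        gcls F n (a + b) \<in> W n) \<and>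
     (\<forall>n a c. a \<in> F n \<longrightarrow> gcls F n a \<in> W n \<longrightarrow> gcls F n (sc c a) \<in> W n) \<and>
     (\<forall>m n k a b. a \<in> F m \<longrightarrow> b \<in> F n \<longrightarrow> gcls F n b \<in> W n \<longrightarrow>
        gcls F (tgt m n k) (Y a k b) \<in> W (tgt m n k))"

definition gr_graded_irreducible ::
  "(complex \<Rightarrow> 'v \<Rightarrow> 'v) \<Rightarrow> ('v \<Rightarrow> int \<Rightarrow> 'v \<Rightarrow> 'v::ab_group_add) \<Rightarrow> (int \<Rightarrow> 'v set) \<Rightarrow>
   (int \<Rightarrow> int \<Rightarrow> int \<Rightarrow> int) \<Rightarrow> bool" where
  "gr_graded_irreducible sc Y F tgt \<longleftrightarrow>
     (\<forall>W. gr_graded_submodule sc Y F tgt W \<longrightarrow>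
        (\<forall>n. W n = {gcls F n 0}) \<or> (\<forall>n. W n = gpiece F n))"

end

theory Submission
  imports Defs
begin

lemma coset_eq_iff:
  fixes H :: "'v::ab_group_add set"
  assumes h0: "0 \<in> H" and hadd: "\<And>x y. x \<in> H \<Longrightarrow> y \<in> H \<Longrightarrow> x + y \<in> H"
    and hdiff: "\<And>x y. x \<in> H \<Longrightarrow> y \<in> H \<Longrightarrow> x - y \<in> H"
  shows "((\<lambda>x. a + x) ` H = (\<lambda>x. b + x) ` H) \<longleftrightarrow> a - b \<in> H"
proof
  assume e: "(\<lambda>x. a + x) ` H = (\<lambda>x. b + x) ` H"
  have "a \<in> (\<lambda>x. a + x) ` H" using h0 by (metis add.right_neutral image_eqI)
  then obtain x where "x \<in> H" "a = b + x" using e by auto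
  then show "a - b \<in> H" by (simp add: algebra_simps)
next
  assume d: "a - b \<in> H"
  have nd: "b - a \<in> H" using hdiff[OF h0 d] by simp
  show "(\<lambda>x. a + x) ` H = (\<lambda>x. b + x) ` H"
  proof (intro equalityI subsetI)
    fix y assume "y \<in> (\<lambda>x. a + x) ` H"
    then obtain x where x: "x \<in> H" "y = a + x" by auto
    then have "y = b + ((a - b) + x)" by (simp add: algebra_simps)
    moreover have "(a - b) + x \<in> H" using hadd[OF d x(1)] .
    ultimately show "y \<in> (\<lambda>x. b + x) ` H" by blast
  next
    fix y assume "y \<in> (\<lambda>x. b + x) ` H"
    then obtain x where x: "x \<in> H" "y = b + x" by auto
    then have "y = a + ((b - a) + x)" by (simp add: algebra_simps)
    moreover have "(b - a) + x \<in> H" using hadd[OF nd x(1)] .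
    ultimately show "y \<in> (\<lambda>x. a + x) ` H" by blast
  qed
qed

lemma general:
  fixes sc :: "complex \<Rightarrow> 'v \<Rightarrow> 'v::ab_group_add"
    and Y :: "'v \<Rightarrow> int \<Rightarrow> 'v \<Rightarrow> 'v"
    and F :: "int \<Rightarrow> 'v set"
  assumes VA: "nonlocal_VA sc Y vac"
    and GF: "good_filtration sc vac F"
    and FC: "filt_compatible Y F tgt"
    and GI: "gr_graded_irreducible sc Y F tgt"
    and TG: "\<And>m n k. tgt m (n - 1) k = tgt m n k - 1"
  shows "adjoint_irreducible sc Y"
proof -
  have vs: "vector_space sc" using VA unfolding nonlocal_VA_def by blast
  then interpret vector_space sc .
  have lin: "Y a k (x + y) = Y a k x + Y a k y" for a k x y
    proof -
    have "Vector_Spaces.linear sc sc (Y a k)" using VA unfolding nonlocal_VA_def by blast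
    then show ?thesis unfolding Vector_Spaces.linear_iff by blast
  qed
  have lind: "Y a k (x - y) = Y a k x - Y a k y" for a k x y
  proof -
    have "Y a k x = Y a k ((x - y) + y)" by simp
    also have "\<dots> = Y a k (x - y) + Y a k y" by (rule lin)
    finally show ?thesis by (simp add: algebra_simps)
  qed
  have lins: "Y a k (sc c x) = sc c (Y a k x)" for a k c x
    proof -
    have "Vector_Spaces.linear sc sc (Y a k)" using VA unfolding nonlocal_VA_def by blast
    then show ?thesis unfolding Vector_Spaces.linear_iff by blast
  qed
  have lins2: "sc c x - sc c y = sc c (x - y)" for c x y
    by (simp add: scale_right_diff_distrib)
  have Fsub: "\<And>n. subspace (F n)" using GF unfolding good_filtration_def by blast
  have Fmono: "\<And>n. F n \<subseteq> F (n + 1)" using GF unfolding good_filtration_def by blast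
  obtain N where FN: "\<And>n. n \<le> N \<Longrightarrow> F n = {0}" using GF unfolding good_filtration_def by blast
  have Fex: "\<And>x. \<exists>n. x \<in> F n" using GF unfolding good_filtration_def by blast
  have geq: "gcls F n a = gcls F n b \<longleftrightarrow> a - b \<in> F (n - 1)" for n a b
    unfolding gcls_def
    by (rule coset_eq_iff) (auto intro: subspace_0 subspace_add subspace_diff Fsub)
  show ?thesis unfolding adjoint_irreducible_def
  proof (intro allI impI)
    fix U assume "subspace U \<and> (\<forall>a k b. b \<in> U \<longrightarrow> Y a k b \<in> U)"
    then have Us: "subspace U" and UY: "\<And>a k b. b \<in> U \<Longrightarrow> Y a k b \<in> U" by auto
    define W where "W n = gcls F n ` (U \<inter> F n)" for n
    have memW: "gcls F n a \<in> W n \<longleftrightarrow> (\<exists>u\<in>U \<inter> F n. a - u \<in> F (n - 1))" for n a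
      unfolding W_def using geq by blast
    have sub: "gr_graded_submodule sc Y F tgt W"
      unfolding gr_graded_submodule_def
    proof (intro conjI allI impI)
      fix n show "W n \<subseteq> gpiece F n" unfolding W_def gpiece_def by auto
    next
      fix n show "gcls F n 0 \<in> W n" unfolding W_def
        using subspace_0[OF Us] subspace_0[OF Fsub] by blast
    next
      fix n a b assume "a \<in> F n" "b \<in> F n" "gcls F n a \<in> W n" "gcls F n b \<in> W n"
      then obtain u v where u: "u \<in> U \<inter> F n" "a - u \<in> F (n - 1)"
        and v: "v \<in> U \<inter> F n" "b - v \<in> F (n - 1)" by (auto simp: memW)
      have "(a + b) - (u + v) = (a - u) + (b - v)" by (simp add: algebra_simps)
      then have "(a + b) - (u + v) \<in> F (n - 1)" using u v subspace_add[OF Fsub] by metis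
      moreover have "u + v \<in> U \<inter> F n" using u v subspace_add[OF Us] subspace_add[OF Fsub] by auto
      ultimately show "gcls F n (a + b) \<in> W n" by (auto simp: memW)
    next
      fix n a c assume "a \<in> F n" "gcls F n a \<in> W n"
      then obtain u where u: "u \<in> U \<inter> F n" "a - u \<in> F (n - 1)" by (auto simp: memW)
      have "sc c a - sc c u \<in> F (n - 1)" using u subspace_scale[OF Fsub] lins2 by metis
      moreover have "sc c u \<in> U \<inter> F n" using u subspace_scale[OF Us] subspace_scale[OF Fsub] by auto
      ultimately show "gcls F n (sc c a) \<in> W n" by (auto simp: memW)
    next
      fix m n k a b assume a: "a \<in> F m" and "b \<in> F n" "gcls F n b \<in> W n"
      then obtain u where u: "u \<in> U \<inter> F n" "b - u \<in> F (n - 1)" by (auto simp: memW)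
      have "Y a k (b - u) \<in> F (tgt m (n - 1) k)" using FC a u unfolding filt_compatible_def by blast
      then have "Y a k b - Y a k u \<in> F (tgt m n k - 1)" using lind TG by metis
      moreover have "Y a k u \<in> U \<inter> F (tgt m n k)" using u UY a FC unfolding filt_compatible_def by blast
      ultimately show "gcls F (tgt m n k) (Y a k b) \<in> W (tgt m n k)" by (auto simp: memW)
    qed
    from GI sub have "(\<forall>n. W n = {gcls F n 0}) \<or> (\<forall>n. W n = gpiece F n)"
      unfolding gr_graded_irreducible_def by blast
    then show "U = {0} \<or> U = UNIV"
    proof
      assume A: "\<forall>n. W n = {gcls F n 0}"
      have down: "u \<in> U \<inter> F n \<Longrightarrow> u \<in> F (n - 1)" for u n
      proof -
        assume "u \<in> U \<inter> F n"
        then have "gcls F n u \<in> W n" unfolding W_def by blast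
        then have "gcls F n u = gcls F n 0" using A by auto
        then show ?thesis using geq by simp
      qed
      have key: "\<forall>u. u \<in> U \<inter> F (N + int j) \<longrightarrow> u = 0" for j :: nat
      proof (induction j)
        case 0 then show ?case using FN by auto
      next
        case (Suc j)
        show ?case
        proof (intro allI impI)
          fix u assume "u \<in> U \<inter> F (N + int (Suc j))"
          then have "u \<in> U \<inter> F (N + int j)" using down[of u "N + int (Suc j)"] by auto
          then show "u = 0" using Suc by blast
        qed
      qed
      have "U \<subseteq> {0}"
      proof
        fix u assume u: "u \<in> U"
        obtain n where n: "u \<in> F n" using Fex by blast
        show "u \<in> {0}"
        proof (cases "n \<le> N")
          case True then show ?thesis using FN n by auto
        next
          case False
          then obtain j where "n = N + int j" by (metis add.commute diff_add_cancel linorder_not_le less_imp_le zero_le_imp_eq_int diff_ge_0_iff_ge)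
          then show ?thesis using key u n by auto
        qed
      qed
      then show ?thesis using subspace_0[OF Us] by blast
    next
      assume A: "\<forall>n. W n = gpiece F n"
      have up: "F (n - 1) \<subseteq> U \<Longrightarrow> F n \<subseteq> U" for n
      proof
        fix a assume H: "F (n - 1) \<subseteq> U" and a: "a \<in> F n"
        have "gcls F n a \<in> W n" using A a unfolding gpiece_def by auto
        then obtain u where u: "u \<in> U \<inter> F n" "a - u \<in> F (n - 1)" by (auto simp: memW)
        have "(a - u) + u \<in> U" using H u subspace_add[OF Us] by blast
        then show "a \<in> U" by simp
      qed
      have key: "F (N + int j) \<subseteq> U" for j :: nat
      proof (induction j)
        case 0 then show ?case using FN subspace_0[OF Us] by auto
      next
        case (Suc j)
        then show ?case using up[of "N + int (Suc j)"] by simp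
      qed
      have "UNIV \<subseteq> U"
      proof
        fix u :: 'v
        obtain n where n: "u \<in> F n" using Fex by blast
        show "u \<in> U"
        proof (cases "n \<le> N")
          case True then show ?thesis using FN n subspace_0[OF Us] by auto
        next
          case False
          then obtain j where "n = N + int j" by (metis add.commute diff_add_cancel linorder_not_le less_imp_le zero_le_imp_eq_int diff_ge_0_iff_ge)
          then show ?thesis using key n by auto
        qed
      qed
      then show ?thesis by blast
    qed
  qed
qed

theorem proposition2p11:
  fixes sc :: "complex \<Rightarrow> 'v \<Rightarrow> 'v::ab_group_add"
    and Y :: "'v \<Rightarrow> int \<Rightarrow> 'v \<Rightarrow> 'v"
    and vac :: 'v
    and F :: "int \<Rightarrow> 'v set"
  assumes "nonlocal_VA sc Y vac"
    and "good_filtration sc vac F"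
    and "(filt_compatible Y F tgt_i \<and> gr_graded_irreducible sc Y F tgt_i) \<or>
         (filt_compatible Y F tgt_ii \<and> gr_graded_irreducible sc Y F tgt_ii)"
  shows "adjoint_irreducible sc Y"
  using assms(3)
proof
  assume "filt_compatible Y F tgt_i \<and> gr_graded_irreducible sc Y F tgt_i"
  then show ?thesis using general[OF assms(1,2)] by (auto simp: tgt_i_def)
next
  assume "filt_compatible Y F tgt_ii \<and> gr_graded_irreducible sc Y F tgt_ii"
  then show ?thesis using general[OF assms(1,2)] by (auto simp: tgt_ii_def)
qed

end
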